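(* Let $n\ge 2$ and $1\le k\le n-1$. The automaton $\mathcal{CB}_{n,k}$ has a reset word of length at most $4n\lceil\log_2 n\rceil$.
   Context: A deterministic finite automaton (DFA) is a triple $\langle Q,\Sigma,\delta\rangle$ with $Q$ a finite set of states, $\Sigma$ a finite alphabet and $\delta\colon Q\times\Sigma\to Q$. Words act on states from left to right: $q\cdot(a_1a_2\cdots a_\ell)=(\cdots((q\cdot a_1)\cdot a_2)\cdots)\cdot a_\ell$, where $q\cdot a=\delta(q,a)$; for $P\subseteq Q$, $P\cdot w=\{p\cdot w\mid p\in P\}$. A word $w$ is a reset (synchronizing) word if $|Q\cdot w|=1$. The automaton $\mathcal{CB}_{n,k}$ has states $q_1,\dots,q_n$ and letters $a,b,c$: $a$ acts as the cyclic permutation $q_i\mapsto q_{i+1}$ for $i<n$ and $q_n\mapsto q_1$; $b$ maps $q_1$ to $q_2$ and fixes all other states; $c$ swaps $q_k$ and $q_{k+1}$ and fixes all other states. *)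

theory Defs
  imports Complex_Main
begin

datatype letter = A | B | C

definition CB_states :: "nat \<Rightarrow> nat set" where
  "CB_states n = {1..n}"

definition CB_delta :: "nat \<Rightarrow> nat \<Rightarrow> nat \<Rightarrow> letter \<Rightarrow> nat" where
  "CB_delta n k q x = (case x of
      A \<Rightarrow> (if q < n then q + 1 else 1)
    | B \<Rightarrow> (if q = 1 then 2 else q)
    | C \<Rightarrow> (if q = k then k + 1 else if q = k + 1 then k else q))"

definition CB_act :: "nat \<Rightarrow> nat \<Rightarrow> nat \<Rightarrow> letter list \<Rightarrow> nat" where
  "CB_act n k q w = foldl (CB_delta n k) q w"

definition CB_reset_word :: "nat \<Rightarrow> nat \<Rightarrow> letter list \<Rightarrow> bool" where
  "CB_reset_word n k w \<longleftrightarrow> card ((\<lambda>q. CB_act n k q w) ` CB_states n) = 1"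

end

theory Submission
  imports Defs
begin


definition U :: "nat \<Rightarrow> nat \<Rightarrow> nat \<Rightarrow> nat \<Rightarrow> nat" where
 "U n k t q = (k + 1 + t + n - q) mod n"

fun usim :: "nat \<Rightarrow> nat \<Rightarrow> nat \<times> nat \<Rightarrow> letter \<Rightarrow> nat \<times> nat" where
  "usim n k (t,u) A = (Suc t, u)"
| "usim n k (t,u) B = (t, if u = (k+t) mod n then (k+t+n-1) mod n else u)"
| "usim n k (t,u) C = (t, if u = t mod n then Suc t mod n else if u = Suc t mod n then t mod n else u)"

fun cntA :: "letter list \<Rightarrow> nat" where
  "cntA [] = 0" | "cntA (x#xs) = (if x = A then 1 else 0) + cntA xs"

lemma U_inj:
  assumes "1 \<le> q1" "q1 \<le> n" "1 \<le> q2" "q2 \<le> n" "U n k t q1 = U n k t q2"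
  shows "q1 = q2"
proof -
  define c where "c = k + 1 + t"
  have e: "(c + n - q1) mod n = (c + n - q2) mod n" using assms(5) unfolding U_def c_def by simp
  have "int (c + n - q1) mod int n = int (c + n - q2) mod int n" using e by (metis of_nat_mod)
  hence "(int c + int n - int q1) mod int n = (int c + int n - int q2) mod int n" using assms by (simp add: of_nat_diff)
  hence d: "int n dvd (int q2 - int q1)" by (simp add: mod_eq_dvd_iff)
  have "\<bar>int q2 - int q1\<bar> < int n" using assms by auto
  thus ?thesis using dvd_imp_le_int[OF _ d] by fastforce
qed

lemma suc_mod_ne: "(n::nat) \<ge> 2 \<Longrightarrow> Suc t mod n \<noteq> t mod n"
proof
  assume n: "n \<ge> 2" and e: "Suc t mod n = t mod n"
  have "Suc t mod n = Suc (t mod n) mod n" by (simp add: mod_Suc_eq)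
  hence e2: "Suc (t mod n) mod n = t mod n" using e by simp
  have lt: "t mod n < n" using n by simp
  show False
  proof (cases "Suc (t mod n) < n")
    case True thus False using e2 by simp
  next
    case False hence "Suc (t mod n) = n" using lt by simp
    thus False using e2 n by (metis mod_self Suc_n_not_le_n numeral_2_eq_2 old.nat.inject zero_neq_one)
  qed
qed

lemma step:
  assumes n: "2 \<le> n" and k: "1 \<le> k" "k < n" and q: "1 \<le> q" "q \<le> n"
  shows "usim n k (t, U n k t q) x = (t + (if x=A then 1 else 0), U n k (t + (if x=A then 1 else 0)) (CB_delta n k q x))
     \<and> 1 \<le> CB_delta n k q x \<and> CB_delta n k q x \<le> n"
proof (cases x)
  case A
  show ?thesis
  proof (cases "q < n")
    case True thus ?thesis using A q by (simp add: U_def CB_delta_def)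
  next
    case False hence "q = n" using q by simp
    have "Suc (k + t + n) mod n = Suc (k + t) mod n"
      by (metis add_Suc mod_add_self2)
    thus ?thesis using A n \<open>q = n\<close> by (simp add: U_def CB_delta_def)
  qed
next
  case B
  have u1: "U n k t 1 = (k+t) mod n" using n by (simp add: U_def add.commute)
  have u2: "U n k t 2 = (k+t+n-1) mod n" using n by (simp add: U_def)
  show ?thesis
  proof (cases "q = 1")
    case True thus ?thesis using B u1 u2 n by (simp add: CB_delta_def)
  next
    case False
    have "U n k t q \<noteq> U n k t 1" using U_inj[of q n 1 k t] q n False by auto
    thus ?thesis using B u1 False q by (simp add: CB_delta_def)
  qed
next
  case C
  have uk: "U n k t k = Suc t mod n" using k by (simp add: U_def) (metis add_Suc mod_add_self2)
  have uk1: "U n k t (Suc k) = t mod n" using k by (simp add: U_def)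
  have ne: "Suc t mod n \<noteq> t mod n" using suc_mod_ne n by blast
  show ?thesis
  proof (cases "q = k \<or> q = Suc k")
    case True thus ?thesis using C uk uk1 ne k by (auto simp: CB_delta_def)
  next
    case False
    have "U n k t q \<noteq> U n k t k" using U_inj[of q n k k t] q k False by auto
    moreover have "U n k t q \<noteq> U n k t (Suc k)" using U_inj[of q n "Suc k" k t] q k False by auto
    ultimately show ?thesis using C uk uk1 False q by (auto simp: CB_delta_def)
  qed
qed

lemma fold_sim:
  assumes n: "2 \<le> n" and k: "1 \<le> k" "k < n"
  shows "1 \<le> q \<Longrightarrow> q \<le> n \<Longrightarrow> foldl (usim n k) (t, U n k t q) w = (t + cntA w, U n k (t + cntA w) (CB_act n k q w))
     \<and> 1 \<le> CB_act n k q w \<and> CB_act n k q w \<le> n"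
proof (induction w arbitrary: q t)
  case Nil thus ?case by (simp add: CB_act_def)
  case (Cons x w)
  note st = step[OF n k Cons.prems, of t x]
  have IH: "foldl (usim n k) (t + (if x = A then 1 else 0), U n k (t + (if x = A then 1 else 0)) (CB_delta n k q x)) w =
     (t + (if x = A then 1 else 0) + cntA w, U n k (t + (if x = A then 1 else 0) + cntA w) (CB_act n k (CB_delta n k q x) w))
     \<and> 1 \<le> CB_act n k (CB_delta n k q x) w \<and> CB_act n k (CB_delta n k q x) w \<le> n"
    using Cons.IH st by blast
  show ?case using IH st by (simp add: CB_act_def add.assoc)
qed

lemma shift: "foldl (usim n k) (t + n, u) w = (fst (foldl (usim n k) (t, u) w) + n, snd (foldl (usim n k) (t, u) w))"
proof (induction w arbitrary: t u)
  case Nil thus ?case by simp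
next
  case (Cons x w)
  have "usim n k (t + n, u) x = (fst (usim n k (t, u) x) + n, snd (usim n k (t, u) x))"
  proof (cases x)
    case A thus ?thesis by simp
  next
    case B
    have "(k + (t + n)) mod n = (k + t) mod n" by (metis add.assoc mod_add_self2)
    moreover have "k + (t + n) + n - 1 = (k + t + n - 1) + n" by arith
    hence "(k + (t + n) + n - 1) mod n = (k + t + n - 1) mod n" by simp
    ultimately show ?thesis using B by simp
  next
    case C
    have "(t + n) mod n = t mod n" by simp
    moreover have "Suc (t + n) mod n = Suc t mod n" by (metis add_Suc mod_add_self2)
    ultimately show ?thesis using C by simp
  qed
  hence e: "usim n k (t + n, u) x = (fst (usim n k (t, u) x) + n, snd (usim n k (t, u) x))" .
  show ?case using Cons.IH[of "fst (usim n k (t, u) x)" "snd (usim n k (t, u) x)"] by (simp add: e)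
qed

lemma shift2: "snd (foldl (usim n k) (t + n, u) w) = snd (foldl (usim n k) (t, u) w)"
  using shift by simp



definition rk :: "nat set \<Rightarrow> nat \<Rightarrow> nat" where "rk P v = card {p\<in>P. p \<le> v}"
definition Cc :: "nat set \<Rightarrow> nat \<Rightarrow> bool" where
  "Cc P t \<longleftrightarrow> odd (rk P t) \<and> rk P (Suc t) = rk P t \<and> rk P t < card P"
definition Yb :: "nat set \<Rightarrow> nat \<Rightarrow> bool" where "Yb P v \<longleftrightarrow> v \<in> P \<and> even (rk P v)"
definition nxt :: "nat set \<Rightarrow> nat \<Rightarrow> nat" where "nxt P v = (LEAST p. p \<in> P \<and> v < p)"
definition hc :: "nat set \<Rightarrow> nat \<Rightarrow> nat" where
  "hc P v = (if odd (rk P v) \<and> rk P v < card P then nxt P v - 1 else v)"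
definition gb :: "nat set \<Rightarrow> nat \<Rightarrow> nat" where "gb P v = (if Yb P v then v - 1 else v)"
definition Fph :: "nat set \<Rightarrow> nat \<Rightarrow> nat" where "Fph P v = gb P (hc P v)"

lemma rk_mono: "finite P \<Longrightarrow> a \<le> b \<Longrightarrow> rk P a \<le> rk P b"
  unfolding rk_def by (rule card_mono) auto

lemma rk_Suc: "finite P \<Longrightarrow> rk P (Suc t) = rk P t + (if Suc t \<in> P then 1 else 0)"
proof -
  assume f: "finite P"
  show ?thesis
  proof (cases "Suc t \<in> P")
    case True
    have "{p\<in>P. p \<le> Suc t} = insert (Suc t) {p\<in>P. p \<le> t}" using True by auto
    thus ?thesis using True f by (simp add: rk_def)
  next
    case False
    have "{p\<in>P. p \<le> Suc t} = {p\<in>P. p \<le> t}" using False le_Suc_eq by auto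
    thus ?thesis using False by (simp add: rk_def)
  qed
qed

lemma rk_le: "finite P \<Longrightarrow> rk P t \<le> card P"
  unfolding rk_def by (rule card_mono) auto

lemma rk_top: "P \<subseteq> {0..<n} \<Longrightarrow> n \<le> Suc t \<Longrightarrow> rk P t = card P"
proof -
  assume a: "P \<subseteq> {0..<n}" "n \<le> Suc t"
  have "{p\<in>P. p \<le> t} = P" using a by auto
  thus ?thesis by (simp add: rk_def)
qed

lemma rk_pos: "finite P \<Longrightarrow> v \<in> P \<Longrightarrow> 1 \<le> rk P v"
proof -
  assume "finite P" "v \<in> P"
  hence "{p\<in>P. p \<le> v} \<noteq> {}" "finite {p\<in>P. p \<le> v}" by auto
  thus ?thesis unfolding rk_def by (simp add: Suc_leI card_gt_0_iff)
qed

lemma rk_strict: "finite P \<Longrightarrow> p \<in> P \<Longrightarrow> q \<in> P \<Longrightarrow> p < q \<Longrightarrow> rk P p < rk P q"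
proof -
  assume f: "finite P" and pq: "p \<in> P" "q \<in> P" "p < q"
  have s: "{x\<in>P. x \<le> p} \<subseteq> {x\<in>P. x \<le> q}" using pq by auto
  have "q \<in> {x\<in>P. x \<le> q}" "q \<notin> {x\<in>P. x \<le> p}" using pq by auto
  hence "{x\<in>P. x \<le> p} \<subset> {x\<in>P. x \<le> q}" using s by blast
  thus ?thesis unfolding rk_def by (rule psubset_card_mono[rotated]) (use f in auto)
qed

lemma rk_inj: "finite P \<Longrightarrow> inj_on (rk P) P"
proof (rule inj_onI)
  fix p q assume f: "finite P" and pq: "p \<in> P" "q \<in> P" "rk P p = rk P q"
  show "p = q"
  proof (rule linorder_cases[of p q])
    assume "p < q" thus ?thesis using rk_strict[OF f pq(1,2)] pq(3) by simp
  next
    assume "q < p" thus ?thesis using rk_strict[OF f pq(2,1)] pq(3) by simp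
  qed
qed

lemma rk_pred: "finite P \<Longrightarrow> v \<in> P \<Longrightarrow> 1 \<le> v \<Longrightarrow> rk P v = Suc (rk P (v - 1))"
  using rk_Suc[of P "v - 1"] by simp

lemma nxt_props:
  assumes f: "finite P" and v: "v \<in> P" and r: "rk P v < card P"
  shows "nxt P v \<in> P" "v < nxt P v" "\<And>p. p \<in> P \<Longrightarrow> v < p \<Longrightarrow> nxt P v \<le> p"
proof -
  have "\<exists>p. p \<in> P \<and> v < p"
  proof (rule ccontr)
    assume "\<not> ?thesis"
    hence "{p\<in>P. p \<le> v} = P" by auto
    thus False using r by (simp add: rk_def)
  qed
  then obtain p0 where p0: "p0 \<in> P \<and> v < p0" by blast
  show "nxt P v \<in> P" "v < nxt P v" using LeastI[of "\<lambda>p. p \<in> P \<and> v < p", OF p0] unfolding nxt_def by auto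
  show "\<And>p. p \<in> P \<Longrightarrow> v < p \<Longrightarrow> nxt P v \<le> p" unfolding nxt_def by (simp add: Least_le)
qed

lemma rk_const:
  assumes f: "finite P" and v: "v \<in> P" and r: "rk P v < card P" and t: "v \<le> t" "t < nxt P v"
  shows "rk P t = rk P v"
proof -
  have "{p\<in>P. p \<le> t} = {p\<in>P. p \<le> v}"
    using nxt_props(3)[OF f v r] t by force
  thus ?thesis by (simp add: rk_def)
qed

lemma rk_nxt:
  assumes f: "finite P" and v: "v \<in> P" and r: "rk P v < card P"
  shows "rk P (nxt P v) = Suc (rk P v)"
proof -
  have y: "nxt P v \<in> P" "v < nxt P v" using nxt_props[OF f v r] by auto
  have "v \<le> nxt P v - 1" "nxt P v - 1 < nxt P v" using y by auto
  hence "rk P (nxt P v - 1) = rk P v" by (rule rk_const[OF f v r])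
  moreover have "rk P (nxt P v) = Suc (rk P (nxt P v - 1))" using rk_pred[OF f y(1)] y by simp
  ultimately show ?thesis by simp
qed



definition cblk :: "nat set \<Rightarrow> nat \<Rightarrow> letter list" where
  "cblk P t = (if Cc P t then [C] else []) @ [A]"
definition csweep :: "nat \<Rightarrow> nat set \<Rightarrow> letter list" where
  "csweep n P = concat (map (cblk P) [0..<n])"

lemma Cc_top: "P \<subseteq> {0..<n} \<Longrightarrow> n \<le> Suc t \<Longrightarrow> \<not> Cc P t"
  using rk_top[of P n t] by (simp add: Cc_def)

lemma cblk_step: "t < n \<Longrightarrow> foldl (usim n k) (t, u) (cblk P t) =
   (Suc t, if Cc P t then (if u = t then Suc t mod n else if u = Suc t mod n then t else u) else u)"
  by (simp add: cblk_def)

lemma csweep_inv: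
  assumes Pn: "P \<subseteq> {0..<n}" and n: "2 \<le> n" and v: "v \<in> P"
  shows "i \<le> n \<Longrightarrow> foldl (usim n k) (0, v) (concat (map (cblk P) [0..<i])) =
     (i, (if i \<le> v then v else if odd (rk P v) \<and> rk P v < card P then min i (nxt P v - 1) else v))"
proof (induction i)
  case 0 thus ?case by simp
next
  case (Suc i)
  have f: "finite P" using Pn finite_subset by blast
  have i: "i < n" using Suc.prems by simp
  have vn: "v < n" using v Pn by auto
  define p where "p = (if i \<le> v then v else if odd (rk P v) \<and> rk P v < card P then min i (nxt P v - 1) else v)"
  have IH: "foldl (usim n k) (0, v) (concat (map (cblk P) [0..<i])) = (i, p)" using Suc p_def by simp
  have "foldl (usim n k) (0, v) (concat (map (cblk P) [0..<Suc i])) =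
     (Suc i, if Cc P i then (if p = i then Suc i mod n else if p = Suc i mod n then i else p) else p)"
    using IH cblk_step[OF i] by simp
  moreover have "(if Cc P i then (if p = i then Suc i mod n else if p = Suc i mod n then i else p) else p)
     = (if Suc i \<le> v then v else if odd (rk P v) \<and> rk P v < card P then min (Suc i) (nxt P v - 1) else v)"
  proof (cases "i < v")
    case True
    hence pv: "p = v" by (simp add: p_def)
    have "\<not> (Cc P i \<and> v = Suc i)"
    proof
      assume a: "Cc P i \<and> v = Suc i"
      hence "rk P (Suc i) = rk P i + 1" using rk_Suc[OF f, of i] v by simp
      thus False using a by (simp add: Cc_def)
    qed
    moreover have "Suc i mod n = Suc i" using True vn by simp
    ultimately show ?thesis using True pv by auto
  next
    case False
    hence vi: "v \<le> i" by simp
    show ?thesis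
    proof (cases "odd (rk P v) \<and> rk P v < card P")
      case car: True
      note y = nxt_props[OF f v conjunct2[OF car]]
      have yn: "nxt P v < n" using y(1) Pn by auto
      have pm: "p = min i (nxt P v - 1)" using vi car y(2) by (auto simp: p_def)
      show ?thesis
      proof (cases "i < nxt P v - 1")
        case True
        have r1: "rk P i = rk P v" using rk_const[OF f v conjunct2[OF car] vi] True by simp
        have r2: "rk P (Suc i) = rk P v" using rk_const[OF f v conjunct2[OF car], of "Suc i"] True vi by simp
        have cc: "Cc P i" using r1 r2 car by (simp add: Cc_def)
        have "p = i" using pm True by simp
        moreover have "Suc i mod n = Suc i" using True yn by simp
        ultimately show ?thesis using cc True vi car by simp
      next
        case False
        have py: "p = nxt P v - 1" using pm False by simp
        have "\<not> (Cc P i \<and> p = i)"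
        proof
          assume a: "Cc P i \<and> p = i"
          hence "Suc i = nxt P v" using py y(2) by linarith
          hence "rk P (Suc i) = rk P i + 1" using rk_Suc[OF f, of i] y(1) by simp
          thus False using a by (simp add: Cc_def)
        qed
        moreover have "\<not> (Cc P i \<and> p = Suc i mod n)"
        proof
          assume a: "Cc P i \<and> p = Suc i mod n"
          show False
          proof (cases "Suc i < n")
            case True thus False using a py False by simp
          next
            case False thus False using a Cc_top[OF Pn] by simp
          qed
        qed
        ultimately show ?thesis using py False vi car by simp
      qed
    next
      case ncar: False
      have pv: "p = v" using ncar unfolding p_def by auto
      have "\<not> (Cc P i \<and> v = i)" using ncar by (auto simp: Cc_def)
      moreover have "\<not> (Cc P i \<and> v = Suc i mod n)"
      proof
        assume a: "Cc P i \<and> v = Suc i mod n"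
        show False
        proof (cases "Suc i < n")
          case True thus False using a vi by simp
        next
          case False thus False using a Cc_top[OF Pn] by simp
        qed
      qed
      ultimately show ?thesis using pv ncar vi by auto
    qed
  qed
  ultimately show ?case by simp
qed

lemma csweep_res:
  assumes Pn: "P \<subseteq> {0..<n}" and n: "2 \<le> n" and v: "v \<in> P"
  shows "foldl (usim n k) (0, v) (csweep n P) = (n, hc P v)"
proof -
  have f: "finite P" using Pn finite_subset by blast
  have vn: "v < n" using v Pn by auto
  have "foldl (usim n k) (0, v) (csweep n P) =
     (n, (if n \<le> v then v else if odd (rk P v) \<and> rk P v < card P then min n (nxt P v - 1) else v))"
    unfolding csweep_def using csweep_inv[OF Pn n v] by simp
  moreover have "(if n \<le> v then v else if odd (rk P v) \<and> rk P v < card P then min n (nxt P v - 1) else v) = hc P v"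
  proof (cases "odd (rk P v) \<and> rk P v < card P")
    case True
    have "nxt P v < n" using nxt_props(1)[OF f v conjunct2[OF True]] Pn by auto
    thus ?thesis using True vn by (simp add: hc_def)
  next
    case False thus ?thesis using vn unfolding hc_def by auto
  qed
  ultimately show ?thesis by simp
qed



definition bblk :: "nat \<Rightarrow> nat \<Rightarrow> nat set \<Rightarrow> nat \<Rightarrow> letter list" where
  "bblk n k P t = (if Yb P ((k+t) mod n) then [B] else []) @ [A]"
definition bsweep :: "nat \<Rightarrow> nat \<Rightarrow> nat set \<Rightarrow> letter list" where
  "bsweep n k P = concat (map (bblk n k P) [0..<n])"

lemma bblk_step: "foldl (usim n k) (t, u) (bblk n k P t) =
   (Suc t, if Yb P ((k+t) mod n) \<and> u = (k+t) mod n then (k+t+n-1) mod n else u)"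
  by (simp add: bblk_def)

lemma M1: "(i::nat) < n \<Longrightarrow> v < n \<Longrightarrow> k < n \<Longrightarrow> ((k+i) mod n = v) = (i = (v+n-k) mod n)"
proof -
  assume a: "i < n" "v < n" "k < n"
  have e1: "(k+i) mod n = (if k + i < n then k + i else k + i - n)"
  proof (cases "k + i < n")
    case True thus ?thesis by simp
  next
    case False
    hence "(k+i) mod n = (k + i - n) mod n" by (simp add: le_mod_geq)
    moreover have "k + i - n < n" using a by linarith
    ultimately show ?thesis using False by simp
  qed
  have e2: "(v+n-k) mod n = (if v + n - k < n then v + n - k else v - k)"
  proof (cases "v + n - k < n")
    case True thus ?thesis by simp
  next
    case False
    hence "(v + n - k) mod n = (v + n - k - n) mod n" by (simp add: le_mod_geq)
    moreover have "v + n - k - n < n" "v + n - k - n = v - k" using a by linarith+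
    ultimately show ?thesis using False by simp
  qed
  show ?thesis unfolding e1 e2 using a by auto
qed

lemma M2: "(k::nat) < n \<Longrightarrow> 1 \<le> (k+t) mod n \<Longrightarrow> (k+t+n-1) mod n = (k+t) mod n - 1"
proof -
  assume a: "k < n" "1 \<le> (k+t) mod n"
  hence kt: "1 \<le> k + t" by (metis add_is_0 mod_0 not_one_le_zero le_zero_eq linorder_not_less less_one)
  have "k+t+n-1 = (k+t-1) + n" using kt by simp
  hence "(k+t+n-1) mod n = (k+t-1) mod n" by simp
  also have "\<dots> = (k+t) mod n - 1"
  proof -
    have n: "0 < n" using a by simp
    have "k + t = (k+t) div n * n + (k+t) mod n" by simp
    hence "k + t - 1 = (k+t) div n * n + ((k+t) mod n - 1)" using a by linarith
    hence "(k+t-1) mod n = ((k+t) mod n - 1) mod n" by (metis mod_mult_self3)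
    moreover have "(k+t) mod n - 1 < n" using n by (meson le_less_trans diff_le_self mod_less_divisor)
    ultimately show ?thesis by simp
  qed
  finally show ?thesis .
qed

lemma Yb_pos: "finite P \<Longrightarrow> Yb P v \<Longrightarrow> 1 \<le> v"
proof (rule ccontr)
  assume f: "finite P" and y: "Yb P v" and "\<not> 1 \<le> v"
  hence v0: "v = 0" by simp
  have "{p\<in>P. p \<le> 0} \<subseteq> {0}" by auto
  hence "card {p\<in>P. p \<le> 0} \<le> card {0::nat}" by (rule card_mono[rotated]) simp
  hence "rk P 0 \<le> 1" unfolding rk_def by simp
  moreover have "1 \<le> rk P 0" using rk_pos[OF f] y v0 by (simp add: Yb_def)
  ultimately have "rk P 0 = 1" by simp
  thus False using y v0 by (simp add: Yb_def)
qed

lemma Yb_pred: "finite P \<Longrightarrow> Yb P v \<Longrightarrow> \<not> Yb P (v - 1)"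
proof
  assume f: "finite P" and y: "Yb P v" and y': "Yb P (v - 1)"
  have "1 \<le> v" using Yb_pos[OF f y] .
  hence "rk P v = Suc (rk P (v - 1))" using rk_pred[OF f] y by (simp add: Yb_def)
  thus False using y y' by (simp add: Yb_def)
qed

lemma bsweep_inv:
  assumes f: "finite P" and k: "k < n" and v: "v < n"
  shows "i \<le> n \<Longrightarrow> foldl (usim n k) (0, v) (concat (map (bblk n k P) [0..<i])) =
     (i, if Yb P v \<and> (v + n - k) mod n < i then v - 1 else v)"
proof (induction i)
  case 0 thus ?case by simp
next
  case (Suc i)
  have i: "i < n" using Suc.prems by simp
  define p where "p = (if Yb P v \<and> (v + n - k) mod n < i then v - 1 else v)"
  define w where "w = (k+i) mod n"
  have IH: "foldl (usim n k) (0, v) (concat (map (bblk n k P) [0..<i])) = (i, p)" using Suc p_def by simp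
  have "foldl (usim n k) (0, v) (concat (map (bblk n k P) [0..<Suc i])) =
     (Suc i, if Yb P w \<and> p = w then (k+i+n-1) mod n else p)"
    using IH bblk_step[of n k i p P] by (simp add: w_def)
  moreover have "(if Yb P w \<and> p = w then (k+i+n-1) mod n else p) =
     (if Yb P v \<and> (v + n - k) mod n < Suc i then v - 1 else v)"
  proof (cases "Yb P v \<and> (v + n - k) mod n < i")
    case True
    hence pv: "p = v - 1" by (simp add: p_def)
    have "\<not> (Yb P w \<and> p = w)" using Yb_pred[OF f] True pv by auto
    thus ?thesis using True pv by auto
  next
    case False
    hence pv: "p = v" unfolding p_def by auto
    show ?thesis
    proof (cases "Yb P w \<and> v = w")
      case True
      have ti: "i = (v + n - k) mod n" using M1[OF i v k] True by (simp add: w_def)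
      have "1 \<le> w" using Yb_pos[OF f] True by simp
      hence "(k+i+n-1) mod n = w - 1" using M2[OF k] by (simp add: w_def)
      thus ?thesis using True pv ti by auto
    next
      case nh: False
      have "\<not> (Yb P v \<and> (v + n - k) mod n = i)"
      proof
        assume a: "Yb P v \<and> (v + n - k) mod n = i"
        hence "w = v" using M1[OF i v k] by (simp add: w_def)
        thus False using a nh by simp
      qed
      thus ?thesis using nh pv False by auto
    qed
  qed
  ultimately show ?case by simp
qed

lemma bsweep_res:
  assumes f: "finite P" and k: "k < n" and v: "v < n"
  shows "foldl (usim n k) (0, v) (bsweep n k P) = (n, gb P v)"
proof -
  have "(v + n - k) mod n < n" using v by simp
  thus ?thesis using bsweep_inv[OF f k v, of n] unfolding bsweep_def gb_def by simp
qed



lemma evens_card: "card {j\<in>{1..m::nat}. even j \<or> j = m} \<le> (m + 1) div 2"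
proof -
  have "{j\<in>{1..m::nat}. even j \<or> j = m} \<subseteq> (\<lambda>i. min (2*i) m) ` {1..(m+1) div 2}"
  proof
    fix j assume j: "j \<in> {j\<in>{1..m::nat}. even j \<or> j = m}"
    show "j \<in> (\<lambda>i. min (2*i) m) ` {1..(m+1) div 2}"
    proof (cases "even j")
      case True
      hence "j = min (2 * (j div 2)) m" "j div 2 \<in> {1..(m+1) div 2}" using j by auto
      thus ?thesis by blast
    next
      case False
      hence jm: "j = m" using j by auto
      hence "j = min (2 * ((m+1) div 2)) m" "(m+1) div 2 \<in> {1..(m+1) div 2}" using j False by auto
      thus ?thesis by blast
    qed
  qed
  hence "card {j\<in>{1..m::nat}. even j \<or> j = m} \<le> card ((\<lambda>i. min (2*i) m) ` {1..(m+1) div 2})"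
    by (rule card_mono[rotated]) simp
  also have "\<dots> \<le> card {1..(m+1) div 2}" by (rule card_image_le) simp
  finally show ?thesis by simp
qed

lemma Fph_card:
  assumes f: "finite P"
  shows "card (Fph P ` P) \<le> (card P + 1) div 2"
proof -
  define Z where "Z = {v\<in>P. even (rk P v) \<or> rk P v = card P}"
  have sub: "Fph P ` P \<subseteq> Fph P ` Z"
  proof
    fix x assume "x \<in> Fph P ` P"
    then obtain v where v: "v \<in> P" "x = Fph P v" by blast
    show "x \<in> Fph P ` Z"
    proof (cases "v \<in> Z")
      case True thus ?thesis using v by blast
    next
      case False
      hence od: "odd (rk P v)" and lt: "rk P v < card P" using v rk_le[OF f, of v] by (auto simp: Z_def)
      define y where "y = nxt P v"
      have y: "y \<in> P" "v < y" using nxt_props[OF f v(1) lt] by (auto simp: y_def)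
      have ry: "rk P y = Suc (rk P v)" using rk_nxt[OF f v(1) lt] by (simp add: y_def)
      hence ev: "even (rk P y)" using od by simp
      hence yZ: "y \<in> Z" using y by (simp add: Z_def)
      have Yy: "Yb P y" using y ev by (simp add: Yb_def)
      have "Fph P y = y - 1" using ev Yy by (simp add: Fph_def hc_def gb_def)
      moreover have "Fph P v = y - 1"
        using od lt Yb_pred[OF f Yy] by (simp add: Fph_def hc_def gb_def y_def)
      ultimately have "x = Fph P y" using v by simp
      thus ?thesis using yZ by blast
    qed
  qed
  have fZ: "finite Z" using f by (simp add: Z_def)
  have "card (Fph P ` P) \<le> card (Fph P ` Z)" using sub fZ by (simp add: card_mono)
  also have "\<dots> \<le> card Z" by (rule card_image_le[OF fZ])
  also have "\<dots> = card (rk P ` Z)"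
    using inj_on_subset[OF rk_inj[OF f]] by (metis (no_types, lifting) Z_def card_image mem_Collect_eq subsetI)
  also have "\<dots> \<le> card {j\<in>{1..card P}. even j \<or> j = card P}"
  proof (rule card_mono)
    show "rk P ` Z \<subseteq> {j\<in>{1..card P}. even j \<or> j = card P}"
      using rk_pos[OF f] rk_le[OF f] by (auto simp: Z_def)
  qed simp
  also have "\<dots> \<le> (card P + 1) div 2" by (rule evens_card)
  finally show ?thesis .
qed

fun Pfin :: "nat \<Rightarrow> nat set \<Rightarrow> nat set" where
  "Pfin 0 P = P" | "Pfin (Suc j) P = Pfin j (Fph P ` P)"

fun wrd :: "nat \<Rightarrow> nat \<Rightarrow> nat \<Rightarrow> nat set \<Rightarrow> letter list" where
  "wrd n k 0 P = []"
| "wrd n k (Suc j) P = csweep n P @ bsweep n k P @ wrd n k j (Fph P ` P)"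

lemma hc_lt: "P \<subseteq> {0..<n} \<Longrightarrow> v \<in> P \<Longrightarrow> hc P v < n"
proof -
  assume Pn: "P \<subseteq> {0..<n}" and v: "v \<in> P"
  have f: "finite P" using Pn finite_subset by blast
  show ?thesis
  proof (cases "odd (rk P v) \<and> rk P v < card P")
    case True
    have "nxt P v \<in> P" using nxt_props(1)[OF f v] True by blast
    thus ?thesis using True Pn by (auto simp: hc_def)
  next
    case False thus ?thesis using v Pn unfolding hc_def by auto
  qed
qed

lemma Fph_sub: "P \<subseteq> {0..<n} \<Longrightarrow> Fph P ` P \<subseteq> {0..<n}"
proof
  fix x assume Pn: "P \<subseteq> {0..<n}" and "x \<in> Fph P ` P"
  then obtain v where v: "v \<in> P" "x = Fph P v" by blast
  have "hc P v < n" using hc_lt[OF Pn v(1)] .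
  thus "x \<in> {0..<n}" using v by (auto simp: Fph_def gb_def)
qed

lemma Pfin_sub: "P \<subseteq> {0..<n} \<Longrightarrow> Pfin j P \<subseteq> {0..<n}"
proof (induction j arbitrary: P)
  case 0 thus ?case by simp
next
  case (Suc j) thus ?case using Fph_sub[OF Suc.prems] by simp
qed

lemma wrd_sim:
  assumes n: "2 \<le> n" and k: "k < n"
  shows "P \<subseteq> {0..<n} \<Longrightarrow> u \<in> P \<Longrightarrow> snd (foldl (usim n k) (0, u) (wrd n k j P)) \<in> Pfin j P"
proof (induction j arbitrary: P u)
  case 0 thus ?case by simp
next
  case (Suc j)
  have f: "finite P" using Suc.prems(1) finite_subset by blast
  have c: "foldl (usim n k) (0, u) (csweep n P) = (n, hc P u)" by (rule csweep_res[OF Suc.prems(1) n Suc.prems(2)])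
  have hl: "hc P u < n" by (rule hc_lt[OF Suc.prems])
  have b0: "foldl (usim n k) (0, hc P u) (bsweep n k P) = (n, gb P (hc P u))" by (rule bsweep_res[OF f k hl])
  have b: "foldl (usim n k) (0 + n, hc P u) (bsweep n k P) = (n + n, Fph P u)"
    using shift[of n k 0 "hc P u" "bsweep n k P"] b0 by (simp add: Fph_def)
  have r: "snd (foldl (usim n k) (n + n, Fph P u) (wrd n k j (Fph P ` P))) =
        snd (foldl (usim n k) (0, Fph P u) (wrd n k j (Fph P ` P)))"
    using shift2[of n k "0 + n"] shift2[of n k 0] by simp
  have "snd (foldl (usim n k) (0, Fph P u) (wrd n k j (Fph P ` P))) \<in> Pfin j (Fph P ` P)"
    using Suc.IH[OF Fph_sub[OF Suc.prems(1)]] Suc.prems(2) by blast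
  thus ?case using c b r by simp
qed

lemma card_Pfin: "finite P \<Longrightarrow> card P \<le> 2 ^ j \<Longrightarrow> card (Pfin j P) \<le> 1"
proof (induction j arbitrary: P)
  case 0 thus ?case by simp
next
  case (Suc j)
  have "card (Fph P ` P) \<le> (card P + 1) div 2" by (rule Fph_card[OF Suc.prems(1)])
  also have "\<dots> \<le> (2 ^ Suc j + 1) div 2" using Suc.prems(2) by (simp add: div_le_mono)
  also have "\<dots> = 2 ^ j" by simp
  finally show ?case using Suc.IH[of "Fph P ` P"] Suc.prems(1) by simp
qed

lemma len_concat: "(\<And>x. x \<in> set xs \<Longrightarrow> length (f x) \<le> 2) \<Longrightarrow> length (concat (map f xs)) \<le> 2 * length xs"
proof (induction xs)
  case Nil thus ?case by simp
next
  case (Cons a xs)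
  have "length (f a) \<le> 2" using Cons.prems by simp
  moreover have "length (concat (map f xs)) \<le> 2 * length xs" using Cons by simp
  ultimately show ?case by simp
qed

lemma len_wrd: "length (wrd n k j P) \<le> 4 * n * j"
proof (induction j arbitrary: P)
  case 0 thus ?case by simp
next
  case (Suc j)
  have "length (csweep n P) \<le> 2 * n" unfolding csweep_def
    using len_concat[of "[0..<n]" "cblk P"] by (simp add: cblk_def)
  moreover have "length (bsweep n k P) \<le> 2 * n" unfolding bsweep_def
    using len_concat[of "[0..<n]" "bblk n k P"] by (simp add: bblk_def)
  ultimately show ?case using Suc.IH[of "Fph P ` P"] by simp
qed



theorem theorem1:
  fixes n k :: nat
  assumes "n \<ge> 2" and "1 \<le> k" and "k \<le> n - 1"
  shows "\<exists>w. CB_reset_word n k w \<and>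
           real (length w) \<le> 4 * real n * real_of_int \<lceil>log 2 (real n)\<rceil>"
proof -
  have n: "2 \<le> n" and k1: "1 \<le> k" and kn: "k < n" using assms by auto
  define L where "L = nat \<lceil>log 2 (real n)\<rceil>"
  have lg: "1 \<le> log 2 (real n)" using n by simp
  have Lr: "real L = real_of_int \<lceil>log 2 (real n)\<rceil>" using lg by (simp add: L_def)
  have "real n = 2 powr (log 2 (real n))" using n by simp
  also have "\<dots> \<le> 2 powr (real L)" using Lr by (intro powr_mono) auto
  also have "\<dots> = 2 ^ L" by (simp add: powr_realpow)
  finally have nL: "n \<le> 2 ^ L" by (metis of_nat_le_iff of_nat_numeral of_nat_power)
  define w where "w = wrd n k L {0..<n}"
  define T where "T = cntA w"
  define S where "S = (\<lambda>q. CB_act n k q w) ` CB_states n"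
  have SU: "U n k T ` S \<subseteq> Pfin L {0..<n}"
  proof
    fix x assume "x \<in> U n k T ` S"
    then obtain q where q: "q \<in> {1..n}" "x = U n k T (CB_act n k q w)" by (auto simp: S_def CB_states_def)
    have fs: "foldl (usim n k) (0, U n k 0 q) w = (T, U n k T (CB_act n k q w))"
      using fold_sim[OF n k1 kn, of q 0 w] q by (simp add: T_def)
    have "U n k 0 q \<in> {0..<n}" using n by (simp add: U_def)
    hence "snd (foldl (usim n k) (0, U n k 0 q) w) \<in> Pfin L {0..<n}"
      unfolding w_def by (rule wrd_sim[OF n kn order_refl])
    thus "x \<in> Pfin L {0..<n}" using fs q by simp
  qed
  have Ssub: "S \<subseteq> {1..n}"
  proof
    fix x assume "x \<in> S"
    then obtain q where q: "1 \<le> q" "q \<le> n" "x = CB_act n k q w" by (auto simp: S_def CB_states_def)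
    show "x \<in> {1..n}" using fold_sim[OF n k1 kn q(1,2), of 0 w] q(3) by simp
  qed
  have inj: "inj_on (U n k T) S"
  proof (rule inj_onI)
    fix x y assume a: "x \<in> S" "y \<in> S" "U n k T x = U n k T y"
    have "x \<in> {1..n}" "y \<in> {1..n}" using a Ssub by blast+
    thus "x = y" using U_inj[of x n y k T] a(3) by simp
  qed
  have fP: "finite (Pfin L {0..<n})" using Pfin_sub[of "{0..<n}" n L] finite_subset by blast
  have cP: "card (Pfin L {0..<n}) \<le> 1" by (rule card_Pfin) (use nL in auto)
  have "card S = card (U n k T ` S)" using card_image[OF inj] by simp
  also have "\<dots> \<le> card (Pfin L {0..<n})" by (rule card_mono[OF fP SU])
  finally have c1: "card S \<le> 1" using cP by simp
  have "S \<noteq> {}" "finite S" using n by (auto simp: S_def CB_states_def)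
  hence "card S \<ge> 1" by (simp add: Suc_leI card_gt_0_iff)
  hence reset: "CB_reset_word n k w" using c1 by (simp add: CB_reset_word_def S_def)
  have "length w \<le> 4 * n * L" unfolding w_def by (rule len_wrd)
  hence "real (length w) \<le> 4 * real n * real L" by (metis of_nat_le_iff of_nat_mult of_nat_numeral)
  thus ?thesis using reset Lr by auto
qed

end
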